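(* For every integer $n \geq 1$, $n$ divides $D_n$.
   Context: A linear arrangement of $\{1,\ldots,n\}$ is a sequence $a_1\cdots a_n$ in which each of $1,\ldots,n$ appears exactly once. It contains the pattern $ij$ if $a_t=i$ and $a_{t+1}=j$ for some $t$; otherwise it avoids it. $D_n$ is the number of linear arrangements of $\{1,\ldots,n\}$ avoiding all of the patterns $12, 23, \ldots, (n-1)n, n1$. *)

theory Defs
  imports Main
begin

definition linear_arrangements :: "nat \<Rightarrow> nat list set" where
  "linear_arrangements n = {xs. distinct xs \<and> set xs = {1..n}}"

definition contains_pattern :: "nat list \<Rightarrow> nat \<Rightarrow> nat \<Rightarrow> bool" where
  "contains_pattern xs i j \<longleftrightarrow> (\<exists>t. t + 1 < length xs \<and> xs ! t = i \<and> xs ! (t + 1) = j)"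

definition cyclic_patterns :: "nat \<Rightarrow> (nat \<times> nat) set" where
  "cyclic_patterns n = {(i, i + 1) | i. 1 \<le> i \<and> i < n} \<union> {(n, 1)}"

definition D :: "nat \<Rightarrow> nat" where
  "D n = card {xs \<in> linear_arrangements n.
                 \<forall>(i, j) \<in> cyclic_patterns n. \<not> contains_pattern xs i j}"

end

theory Submission
  imports Defs
begin

definition rot :: "nat \<Rightarrow> nat \<Rightarrow> nat \<Rightarrow> nat" where
  "rot n k x = (x - 1 + k) mod n + 1"

lemma rot_in: "n \<ge> 1 \<Longrightarrow> rot n k x \<in> {1..n}"
  unfolding rot_def by (auto simp: Suc_le_eq)

lemma rot_comp: "x \<ge> 1 \<Longrightarrow> rot n a (rot n b x) = rot n (b + a) x"
  unfolding rot_def by (simp add: mod_add_left_eq add.assoc)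

lemma rot_0: "x \<in> {1..n} \<Longrightarrow> rot n 0 x = x"
  unfolding rot_def by auto

lemma rot_n: "x \<in> {1..n} \<Longrightarrow> rot n n x = x"
proof -
  assume x: "x \<in> {1..n}"
  have "(x - 1 + n) mod n = (x - 1) mod n" by (rule mod_add_self2)
  moreover have "(x - 1) mod n = x - 1" using x by auto
  ultimately have "(x - 1 + n) mod n + 1 = x" using x by (simp only:) auto
  thus ?thesis unfolding rot_def .
qed

lemma rot_inj: "inj_on (rot n k) {1..n}"
proof (rule inj_onI)
  fix x y assume x: "x \<in> {1..n}" and y: "y \<in> {1..n}" and e: "rot n k x = rot n k y"
  have "(x - 1 + k) mod n = (y - 1 + k) mod n" using e unfolding rot_def by simp
  hence "(x - 1) mod n = (y - 1) mod n"
    by (simp add: nat_mod_eq_iff)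
  thus "x = y" using x y by auto
qed

lemma rot_image: "n \<ge> 1 \<Longrightarrow> rot n k ` {1..n} = {1..n}"
  by (meson endo_inj_surj finite_atLeastAtMost image_subsetI rot_in rot_inj)

lemma rot_comm: "x \<ge> 1 \<Longrightarrow> rot n 1 (rot n k x) = rot n k (rot n 1 x)"
  by (simp add: rot_comp add.commute)

lemma rot1: "Suc 0 \<le> i \<Longrightarrow> i \<le> n \<Longrightarrow> rot n (Suc 0) i = (if i = n then 1 else i + 1)"
  unfolding rot_def by auto

lemma cyc: "n \<ge> 1 \<Longrightarrow> cyclic_patterns n = {(i, rot n 1 i) | i. i \<in> {1..n}}"
proof (rule set_eqI)
  fix p :: "nat \<times> nat" assume n: "n \<ge> 1"
  obtain a b where p: "p = (a, b)" by fastforce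
  show "p \<in> cyclic_patterns n \<longleftrightarrow> p \<in> {(i, rot n 1 i) | i. i \<in> {1..n}}"
    unfolding p cyclic_patterns_def using n by (auto simp: rot1 split: if_splits)
qed
lemma nth_in: "set xs \<subseteq> A \<Longrightarrow> t < length xs \<Longrightarrow> xs ! t \<in> A"
  using nth_mem by blast

definition good :: "nat \<Rightarrow> nat list \<Rightarrow> bool" where
  "good n xs \<longleftrightarrow> (\<forall>t. t + 1 < length xs \<longrightarrow> xs ! (t + 1) \<noteq> rot n 1 (xs ! t))"

lemma good_iff:
  assumes "n \<ge> 1" "set xs \<subseteq> {1..n}"
  shows "(\<forall>(i, j) \<in> cyclic_patterns n. \<not> contains_pattern xs i j) \<longleftrightarrow> good n xs"
proof
  assume H: "\<forall>(i, j) \<in> cyclic_patterns n. \<not> contains_pattern xs i j"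
  show "good n xs" unfolding good_def
  proof (rule allI, rule impI)
    fix t assume t: "t + 1 < length xs"
    have i: "xs ! t \<in> {1..n}" using t assms(2) by (intro nth_in) auto
    hence "(xs ! t, rot n 1 (xs ! t)) \<in> cyclic_patterns n" unfolding cyc[OF assms(1)] by blast
    hence "\<not> contains_pattern xs (xs ! t) (rot n 1 (xs ! t))" using H by blast
    thus "xs ! (t + 1) \<noteq> rot n 1 (xs ! t)" using t unfolding contains_pattern_def by blast
  qed
next
  assume G: "good n xs"
  show "\<forall>(i, j) \<in> cyclic_patterns n. \<not> contains_pattern xs i j"
  proof (rule ballI)
    fix p assume "p \<in> cyclic_patterns n"
    then obtain i where p: "p = (i, rot n 1 i)" unfolding cyc[OF assms(1)] by blast
    show "case p of (i, j) \<Rightarrow> \<not> contains_pattern xs i j"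
      unfolding p contains_pattern_def using G unfolding good_def by auto
  qed
qed

lemma good_map:
  assumes "n \<ge> 1" "set xs \<subseteq> {1..n}" "good n xs"
  shows "good n (map (rot n k) xs)"
  unfolding good_def
proof (rule allI, rule impI)
  fix t assume t: "t + 1 < length (map (rot n k) xs)"
  have a: "xs ! t \<in> {1..n}" "xs ! (t+1) \<in> {1..n}" using t assms(2) by (intro nth_in; simp)+
  have b: "rot n 1 (xs ! t) \<in> {1..n}" using rot_in assms(1) by blast
  have "xs ! (t+1) \<noteq> rot n 1 (xs ! t)" using assms(3) t unfolding good_def by auto
  hence "rot n k (xs ! (t+1)) \<noteq> rot n k (rot n 1 (xs ! t))"
    using rot_inj[of n k] a b by (meson inj_on_eq_iff)
  show "map (rot n k) xs ! (t + 1) \<noteq> rot n 1 (map (rot n k) xs ! t)"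
  proof -
    have c: "rot n 1 (rot n k (xs ! t)) = rot n k (rot n 1 (xs ! t))"
      using a(1) by (intro rot_comm) simp
    show ?thesis using t c \<open>rot n k (xs ! (t+1)) \<noteq> rot n k (rot n 1 (xs ! t))\<close> by simp
  qed
qed

theorem corollary3p4:
  fixes n :: nat
  assumes "n \<ge> 1"
  shows "n dvd D n"
proof -
  define S where "S = {xs \<in> linear_arrangements n.
                 \<forall>(i, j) \<in> cyclic_patterns n. \<not> contains_pattern xs i j}"
  have S: "S = {xs. distinct xs \<and> set xs = {1..n} \<and> good n xs}"
    unfolding S_def linear_arrangements_def using good_iff[OF assms] by auto
  define T where "T = {xs \<in> S. hd xs = 1}"
  define g where "g = (\<lambda>(k, ys). map (rot n k) ys)"
  have ne: "xs \<noteq> []" if "xs \<in> S" for xs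
    using that assms unfolding S by auto
  have hdrot: "hd (map (rot n k) ys) = k + 1" if "ys \<in> T" "k < n" for k ys
    using that ne[of ys] unfolding T_def by (simp add: hd_map rot_def)
  have "bij_betw g ({..<n} \<times> T) S"
  proof (rule bij_betw_imageI)
    show "inj_on g ({..<n} \<times> T)"
    proof (rule inj_onI)
      fix p q assume pa: "p \<in> {..<n} \<times> T" and qa: "q \<in> {..<n} \<times> T"
        and e: "g p = g q"
      obtain k ys where p: "p = (k, ys)" by fastforce
      obtain k' ys' where q: "q = (k', ys')" by fastforce
      have a: "k < n" "ys \<in> T" "k' < n" "ys' \<in> T" using pa qa p q by auto
      have e': "map (rot n k) ys = map (rot n k') ys'" using e p q unfolding g_def by simp
      have "k = k'" using hdrot[of ys k] hdrot[of ys' k'] a e' by auto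
      moreover have "set ys \<union> set ys' \<subseteq> {1..n}" using a unfolding T_def S by auto
      ultimately have "ys = ys'"
        using e' rot_inj[of n k] by (metis inj_on_map_eq_map inj_on_subset)
      thus "p = q" using p q \<open>k = k'\<close> by simp
    qed
    show "g ` ({..<n} \<times> T) = S"
    proof
      show "g ` ({..<n} \<times> T) \<subseteq> S"
      proof (rule image_subsetI)
        fix p assume pa: "p \<in> {..<n} \<times> T"
        obtain k ys where p: "p = (k, ys)" by fastforce
        have "k < n" "ys \<in> T" using pa p by auto
        hence ys: "distinct ys" "set ys = {1..n}" "good n ys" unfolding T_def S by auto
        have "map (rot n k) ys \<in> S" unfolding S
          using ys good_map[OF assms, of ys k] rot_inj[of n k] rot_image[OF assms, of k]
          by (auto simp: distinct_map)
        thus "g p \<in> S" unfolding g_def p by simp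
      qed
      show "S \<subseteq> g ` ({..<n} \<times> T)"
      proof
        fix xs assume xs: "xs \<in> S"
        hence xs': "distinct xs" "set xs = {1..n}" "good n xs" unfolding S by auto
        define a where "a = hd xs"
        have a: "a \<in> {1..n}" using ne[OF xs] xs' hd_in_set unfolding a_def by blast
        define k where "k = a - 1"
        define ys where "ys = map (rot n (n - k)) xs"
        have "ys \<in> S" unfolding ys_def S
          using xs' good_map[OF assms, of xs "n-k"] rot_inj[of n "n-k"] rot_image[OF assms, of "n-k"]
          by (auto simp: distinct_map)
        moreover have "hd ys = 1" unfolding ys_def
          using ne[OF xs] a unfolding a_def k_def by (auto simp: hd_map rot_def)
        ultimately have "ys \<in> T" unfolding T_def by auto
        moreover have "k < n" using a k_def by auto
        moreover have "g (k, ys) = xs" unfolding g_def ys_def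
          using xs'(2) a \<open>k < n\<close> by (auto simp: rot_comp rot_n intro!: map_idI)
        ultimately show "xs \<in> g ` ({..<n} \<times> T)" by force
      qed
    qed
  qed
  hence "card S = card ({..<n} \<times> T)" by (simp add: bij_betw_same_card)
  hence "card S = n * card T" by (simp add: card_cartesian_product)
  thus ?thesis unfolding D_def S_def[symmetric] by simp
qed

end
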